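(* Let $\mathcal{G}$ be an additive arithmetical semigroup satisfying Axiom $A^{\#}$ (constants $c_{\mathcal{G}}>0$, $q>1$, $0\le\eta_0<1$) with $Z_{\mathcal{G}}(-q^{-1})\ne0$. Then there is a constant $0\le\eta<1$ such that $$\sum_{\partial(g)=n}\mu(g)=O(q^{\eta n})\qquad(n\ge0).$$
   Context: An additive arithmetical semigroup is a commutative monoid $\mathcal{G}$ (written additively, identity $e_{\mathcal{G}}$) freely generated by a countable set $\mathcal{P}$ of primes, with an additive degree map $\partial\colon\mathcal{G}\to\mathbb{Z}_{\ge0}$, $\partial(e_{\mathcal{G}})=0$, $\partial(P)>0$ for primes, finitely many elements of each degree. Axiom $A^{\#}$: $\#\{g:\partial(g)=n\}=c_{\mathcal{G}}q^n+O(q^{\eta_0 n})$. $Z_{\mathcal{G}}(z)=\prod_{P\in\mathcal{P}}(1-z^{\partial(P)})^{-1}$, meromorphically continued. $\mu$ is the Möbius function: $\mu(e_{\mathcal{G}})=1$, $\mu(P_1+\dots+P_k)=(-1)^k$ for distinct primes, $\mu(g)=0$ if $2P\mid g$ for some prime $P$ (where $h\mid g$ means $g=h+r$ for some $r\in\mathcal{G}$). *)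

theory Defs
  imports "HOL-Analysis.Analysis" "HOL-Library.Multiset"
begin

text \<open>An additive arithmetical semigroup: a commutative monoid (carrier = the type 'a)
  freely generated by the set P of primes, with an additive degree map.\<close>
definition arith_semigroup :: "'a::comm_monoid_add set \<Rightarrow> ('a \<Rightarrow> nat) \<Rightarrow> bool" where
  "arith_semigroup P deg \<longleftrightarrow>
     countable P \<and>
     (\<forall>g. \<exists>!M. set_mset M \<subseteq> P \<and> sum_mset M = g) \<and>
     deg 0 = 0 \<and>
     (\<forall>a b. deg (a + b) = deg a + deg b) \<and>
     (\<forall>p\<in>P. deg p > 0) \<and>
     (\<forall>n. finite {g. deg g = n})"

definition Gcount :: "('a \<Rightarrow> nat) \<Rightarrow> nat \<Rightarrow> nat" where
  "Gcount deg n = card {g. deg g = n}"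

definition axiom_A_sharp :: "('a \<Rightarrow> nat) \<Rightarrow> real \<Rightarrow> real \<Rightarrow> real \<Rightarrow> bool" where
  "axiom_A_sharp deg c q \<eta>0 \<longleftrightarrow>
     (\<exists>C. \<forall>n. \<bar>real (Gcount deg n) - c * q ^ n\<bar> \<le> C * q powr (\<eta>0 * real n))"

definition factorisation :: "'a::comm_monoid_add set \<Rightarrow> 'a \<Rightarrow> 'a multiset" where
  "factorisation P g = (THE M. set_mset M \<subseteq> P \<and> sum_mset M = g)"

definition moebius :: "'a::comm_monoid_add set \<Rightarrow> 'a \<Rightarrow> int" where
  "moebius P g = (if \<exists>p\<in>P. \<exists>r. g = p + p + r then 0
                  else (-1) ^ size (factorisation P g))"

end

theory Submission
  imports Defs "HOL-Complex_Analysis.Complex_Analysis"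
begin

locale asg =
  fixes P :: "'a::comm_monoid_add set" and deg :: "'a \<Rightarrow> nat"
  assumes asg: "arith_semigroup P deg"
begin

abbreviation F where "F \<equiv> factorisation P"

lemma uniq: "\<exists>!M. set_mset M \<subseteq> P \<and> sum_mset M = g"
  using asg unfolding arith_semigroup_def by blast

lemma F_props: "set_mset (F g) \<subseteq> P" "sum_mset (F g) = g"
  using theI'[OF uniq[of g]] unfolding factorisation_def by auto

lemma F_unique: "set_mset M \<subseteq> P \<Longrightarrow> F (sum_mset M) = M"
  using uniq[of "sum_mset M"] F_props[of "sum_mset M"] by blast

lemma F_add: "F (a + b) = F a + F b"
proof -
  have "F (sum_mset (F a + F b)) = F a + F b"
    by (rule F_unique) (use F_props in auto)
  thus ?thesis by (simp add: F_props)
qed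

lemma F_zero: "F 0 = {#}"
  using F_unique[of "{#}"] by simp

lemma F_prime: "p \<in> P \<Longrightarrow> F p = {#p#}"
  using F_unique[of "{#p#}"] by simp

lemma deg_add: "deg (a + b) = deg a + deg b"
  using asg unfolding arith_semigroup_def by blast

lemma deg_zero: "deg 0 = 0"
  using asg unfolding arith_semigroup_def by blast

lemma deg_P: "p \<in> P \<Longrightarrow> deg p > 0"
  using asg unfolding arith_semigroup_def by blast

lemma finite_deg: "finite {g. deg g = n}"
  using asg unfolding arith_semigroup_def by blast

lemma deg_sum_mset: "deg (sum_mset M) = sum_mset (image_mset deg M)"
  by (induction M) (auto simp: deg_zero deg_add)

lemma deg_eq: "deg g = sum_mset (image_mset deg (F g))"
  using deg_sum_mset[of "F g"] F_props by simp

lemma cancel: "a + b = a + c \<Longrightarrow> b = (c::'a)"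
proof -
  assume "a + b = a + c"
  hence "F a + F b = F a + F c" by (metis F_add)
  hence "F b = F c" by simp
  thus ?thesis by (metis F_props(2))
qed

lemma deg_eq_0_iff: "deg g = 0 \<longleftrightarrow> g = 0"
proof
  assume "deg g = 0"
  hence "\<forall>x\<in>#F g. deg x = 0" using deg_eq[of g] by simp
  hence "F g = {#}" using F_props(1)[of g] deg_P by (metis multiset_nonemptyE not_less0 subsetD)
  thus "g = 0" using F_props(2)[of g] by simp
qed (simp add: deg_zero)

lemma finite_deg_le: "finite {g. deg g \<le> n}"
proof -
  have "{g. deg g \<le> n} = (\<Union>m\<le>n. {g. deg g = m})" by auto
  thus ?thesis using finite_deg by simp
qed

lemma count_le_deg: "count (F g) p * deg p \<le> deg g"
proof -
  have "image_mset deg (replicate_mset (count (F g) p) p) \<subseteq># image_mset deg (F g)"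
    by (intro image_mset_subseteq_mono) (simp add: count_le_replicate_mset_subset_eq[symmetric])
  hence "sum_mset (image_mset deg (replicate_mset (count (F g) p) p)) \<le> sum_mset (image_mset deg (F g))"
    by (metis le_iff_add subset_mset.le_iff_add sum_mset.union)
  thus ?thesis by (simp add: deg_eq[of g])
qed

lemma G0: "Gcount deg 0 = 1"
  unfolding Gcount_def using deg_eq_0_iff by simp

lemma sum_mset_count: 
  assumes "finite A" "set_mset M \<subseteq> A"
  shows "sum_mset (image_mset f M) = (\<Sum>x\<in>A. of_nat (count M x) * (f x :: 'b::comm_semiring_1))"
  using assms(2)
proof (induction M)
  case empty then show ?case by simp
next
  case (add x M)
  hence "sum_mset (image_mset f M) = (\<Sum>x\<in>A. of_nat (count M x) * f x)" by simp
  moreover have "(\<Sum>y\<in>A. of_nat (count (add_mset x M) y) * f y) = 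
     (\<Sum>y\<in>A. of_nat (count M y) * f y) + (\<Sum>y\<in>A. if y = x then f y else 0)"
    by (simp add: sum.distrib[symmetric] algebra_simps, intro sum.cong) (auto simp: algebra_simps)
  moreover have "(\<Sum>y\<in>A. if y = x then f y else 0) = f x"
    using add.prems assms(1) by (simp add: sum.delta)
  ultimately show ?case by (simp add: add.commute)
qed

end

context asg
begin

definition Lam :: "nat \<Rightarrow> nat" where
  "Lam k = (\<Sum>p\<in>{p\<in>P. deg p dvd k}. deg p)"

abbreviation G where "G \<equiv> Gcount deg"

lemma count_bij:
  assumes p: "p \<in> P" and le: "j * deg p \<le> n"
  shows "card {g. deg g = n \<and> j \<le> count (F g) p} = G (n - j * deg p)"
proof -
  define R where "R = sum_mset (replicate_mset j p)"
  have FR: "F R = replicate_mset j p" unfolding R_def using p by (intro F_unique) auto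
  have dR: "deg R = j * deg p" unfolding R_def deg_sum_mset by simp
  have inj: "inj_on (\<lambda>r. R + r) {r. deg r = n - j * deg p}"
    by (intro inj_onI) (use cancel in blast)
  have img: "(\<lambda>r. R + r) ` {r. deg r = n - j * deg p} = {g. deg g = n \<and> j \<le> count (F g) p}"
  proof (intro equalityI subsetI)
    fix g assume "g \<in> (\<lambda>r. R + r) ` {r. deg r = n - j * deg p}"
    then obtain r where r: "deg r = n - j * deg p" "g = R + r" by auto
    have "deg g = n" using r dR le by (simp add: deg_add)
    moreover have "j \<le> count (F g) p" using r FR by (simp add: F_add)
    ultimately show "g \<in> {g. deg g = n \<and> j \<le> count (F g) p}" by simp
  next
    fix g assume g: "g \<in> {g. deg g = n \<and> j \<le> count (F g) p}"
    define r where "r = sum_mset (F g - replicate_mset j p)"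
    have sub: "replicate_mset j p \<subseteq># F g" using g by (simp add: count_le_replicate_mset_subset_eq)
    have "R + r = sum_mset (replicate_mset j p + (F g - replicate_mset j p))"
      unfolding R_def r_def by simp
    also have "\<dots> = g" using sub F_props(2)[of g] by (simp add: subset_mset.add_diff_inverse)
    finally have gr: "g = R + r" by simp
    hence "deg g = deg R + deg r" by (simp add: deg_add)
    hence "deg r = n - j * deg p" using g dR by (simp, linarith)
    thus "g \<in> (\<lambda>r. R + r) ` {r. deg r = n - j * deg p}" using gr by blast
  qed
  show ?thesis unfolding Gcount_def using card_image[OF inj] img by simp
qed

lemma sum_if_card: "finite A \<Longrightarrow> (\<Sum>x\<in>A. if Q x then 1 else 0) = (card {x\<in>A. Q x} :: nat)"
  using sum.inter_filter[of A "\<lambda>_. 1::nat" Q] by simp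

lemma card_le_count:
  assumes "c \<le> m" shows "card {j\<in>{1..m}. j \<le> (c::nat)} = c"
proof -
  have "{j\<in>{1..m}. j \<le> c} = {1..c}" using assms by auto
  thus ?thesis by simp
qed

lemma per_prime:
  assumes p: "p \<in> P"
  shows "(\<Sum>g\<in>{g. deg g = n}. count (F g) p) = (\<Sum>j\<in>{1..n div deg p}. G (n - j * deg p))"
proof -
  let ?J = "{1..n div deg p}"
  have dp: "deg p > 0" using deg_P p by simp
  have "(\<Sum>g\<in>{g. deg g = n}. count (F g) p) = (\<Sum>g\<in>{g. deg g = n}. \<Sum>j\<in>?J. if j \<le> count (F g) p then 1 else 0)"
  proof (intro sum.cong refl)
    fix g assume "g \<in> {g. deg g = n}"
    hence "count (F g) p * deg p \<le> n" using count_le_deg[of g p] by simp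
    hence le: "count (F g) p \<le> n div deg p" using dp by (simp add: less_eq_div_iff_mult_less_eq)
    have "(\<Sum>j\<in>?J. if j \<le> count (F g) p then 1 else 0) = card {j\<in>?J. j \<le> count (F g) p}"
      by (rule sum_if_card) simp
    also have "\<dots> = count (F g) p" using card_le_count[OF le] .
    finally show "count (F g) p = (\<Sum>j\<in>?J. if j \<le> count (F g) p then 1 else 0)" by simp
  qed
  also have "\<dots> = (\<Sum>j\<in>?J. \<Sum>g\<in>{g. deg g = n}. if j \<le> count (F g) p then 1 else 0)"
    by (rule sum.swap)
  also have "\<dots> = (\<Sum>j\<in>?J. card {g. deg g = n \<and> j \<le> count (F g) p})"
  proof (intro sum.cong refl)
    fix j
    have "(\<Sum>g\<in>{g. deg g = n}. if j \<le> count (F g) p then 1 else 0) = card {g\<in>{g. deg g = n}. j \<le> count (F g) p}"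
      using finite_deg by (rule sum_if_card)
    thus "(\<Sum>g\<in>{g. deg g = n}. if j \<le> count (F g) p then 1 else 0) = card {g. deg g = n \<and> j \<le> count (F g) p}"
      by simp
  qed
  also have "\<dots> = (\<Sum>j\<in>?J. G (n - j * deg p))"
  proof (intro sum.cong refl)
    fix j assume "j \<in> ?J"
    hence "j * deg p \<le> n" using dp by (simp add: less_eq_div_iff_mult_less_eq)
    thus "card {g. deg g = n \<and> j \<le> count (F g) p} = G (n - j * deg p)" by (rule count_bij[OF p])
  qed
  finally show ?thesis .
qed

lemma reindex_dvd:
  assumes d: "(d::nat) > 0"
  shows "(\<Sum>k\<in>{k\<in>{1..n}. d dvd k}. f k) = (\<Sum>j\<in>{1..n div d}. (f (j * d) :: nat))"
proof -
  have inj: "inj_on (\<lambda>j. j * d) {1..n div d}"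
  proof (rule inj_onI)
    fix x y assume "x * d = y * d" thus "x = y" using d by simp
  qed
  have "(\<lambda>j. j * d) ` {1..n div d} = {k\<in>{1..n}. d dvd k}"
  proof (intro equalityI subsetI)
    fix k assume "k \<in> (\<lambda>j. j * d) ` {1..n div d}"
    then obtain j where "k = j * d" "1 \<le> j" "j \<le> n div d" using d by (auto simp: image_iff)
    thus "k \<in> {k\<in>{1..n}. d dvd k}" using d
      by (auto simp: less_eq_div_iff_mult_less_eq)
  next
    fix k assume k: "k \<in> {k\<in>{1..n}. d dvd k}"
    then obtain j where j: "k = j * d" by (auto elim!: dvdE simp: mult.commute)
    hence "1 \<le> j" "j \<le> n div d" using k d by (auto simp: less_eq_div_iff_mult_less_eq intro: Suc_leI)
    thus "k \<in> (\<lambda>j. j * d) ` {1..n div d}" using j by auto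
  qed
  thus ?thesis using sum.reindex[OF inj, of f] by simp
qed

lemma C1: "n * G n = (\<Sum>k\<in>{1..n}. Lam k * G (n - k))"
proof -
  define Pn where "Pn = {p\<in>P. deg p \<le> n}"
  have fPn: "finite Pn" unfolding Pn_def by (rule finite_subset[OF _ finite_deg_le[of n]]) auto
  have "n * G n = (\<Sum>g\<in>{g. deg g = n}. deg g)" unfolding Gcount_def by simp
  also have "\<dots> = (\<Sum>g\<in>{g. deg g = n}. \<Sum>p\<in>Pn. count (F g) p * deg p)"
  proof (intro sum.cong refl)
    fix g assume g: "g \<in> {g. deg g = n}"
    have "set_mset (F g) \<subseteq> Pn"
    proof
      fix p assume p: "p \<in># F g"
      have "1 * deg p \<le> count (F g) p * deg p" using p by (intro mult_le_mono1) (simp add: Suc_le_eq)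
      also have "\<dots> \<le> n" using count_le_deg[of g p] g by simp
      finally show "p \<in> Pn" using p F_props(1)[of g] unfolding Pn_def by auto
    qed
    thus "deg g = (\<Sum>p\<in>Pn. count (F g) p * deg p)"
      unfolding deg_eq[of g] using sum_mset_count[OF fPn, of "F g" deg] by simp
  qed
  also have "\<dots> = (\<Sum>p\<in>Pn. deg p * (\<Sum>g\<in>{g. deg g = n}. count (F g) p))"
    by (subst sum.swap) (simp add: sum_distrib_left mult.commute)
  also have "\<dots> = (\<Sum>p\<in>Pn. deg p * (\<Sum>j\<in>{1..n div deg p}. G (n - j * deg p)))"
    by (intro sum.cong refl, subst per_prime) (auto simp: Pn_def)
  also have "\<dots> = (\<Sum>p\<in>Pn. \<Sum>k\<in>{k\<in>{1..n}. deg p dvd k}. deg p * G (n - k))"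
    by (intro sum.cong refl, subst reindex_dvd) (auto simp: Pn_def deg_P sum_distrib_left)
  also have "\<dots> = (\<Sum>k\<in>{1..n}. \<Sum>p\<in>{p\<in>Pn. deg p dvd k}. deg p * G (n - k))"
    by (rule sum.swap_restrict[symmetric]) (use fPn in auto)
  also have "\<dots> = (\<Sum>k\<in>{1..n}. Lam k * G (n - k))"
  proof (intro sum.cong refl)
    fix k assume k: "k \<in> {1..n}"
    have "{p\<in>Pn. deg p dvd k} = {p\<in>P. deg p dvd k}" using k unfolding Pn_def
      by (auto dest: dvd_imp_le)
    thus "(\<Sum>p\<in>{p\<in>Pn. deg p dvd k}. deg p * G (n - k)) = Lam k * G (n - k)"
      unfolding Lam_def by (simp add: sum_distrib_right)
  qed
  finally show ?thesis .
qed

end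

lemma sum_Pow_neg1:
  assumes "finite X"
  shows "(\<Sum>S\<in>Pow X. (-1::int) ^ card S) = (if X = {} then 1 else 0)"
  using assms
proof (induction X rule: finite_induct)
  case empty then show ?case by simp
next
  case (insert x X)
  have disj: "Pow X \<inter> insert x ` Pow X = {}" using insert.hyps by auto
  have inj: "inj_on (insert x) (Pow X)" using insert.hyps unfolding inj_on_def by (auto simp: Pow_def)
  have "(\<Sum>S\<in>Pow (insert x X). (-1::int) ^ card S) =
        (\<Sum>S\<in>Pow X. (-1::int) ^ card S) + (\<Sum>S\<in>insert x ` Pow X. (-1::int) ^ card S)"
    unfolding Pow_insert using disj insert.hyps by (intro sum.union_disjoint) auto
  also have "(\<Sum>S\<in>insert x ` Pow X. (-1::int) ^ card S) = (\<Sum>S\<in>Pow X. (-1::int) ^ card (insert x S))"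
    using sum.reindex[OF inj] by simp
  also have "\<dots> = (\<Sum>S\<in>Pow X. - ((-1::int) ^ card S))"
  proof (intro sum.cong refl)
    fix S assume "S \<in> Pow X"
    hence "finite S" "x \<notin> S" using insert.hyps finite_subset by auto
    thus "(-1::int) ^ card (insert x S) = - ((-1::int) ^ card S)" by simp
  qed
  finally show ?case by (simp add: sum_negf)
qed

context asg
begin

lemma mu_alt: "moebius P h = (if \<exists>p. 2 \<le> count (F h) p then 0 else (-1) ^ size (F h))"
proof -
  have "(\<exists>p\<in>P. \<exists>r. h = p + p + r) \<longleftrightarrow> (\<exists>p. 2 \<le> count (F h) p)"
  proof
    assume "\<exists>p\<in>P. \<exists>r. h = p + p + r"
    then obtain p r where "p \<in> P" "h = p + p + r" by blast
    hence "F h = {#p#} + {#p#} + F r" by (simp add: F_add F_prime)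
    thus "\<exists>p. 2 \<le> count (F h) p" by (intro exI[of _ p]) simp
  next
    assume "\<exists>p. 2 \<le> count (F h) p"
    then obtain p where p: "2 \<le> count (F h) p" by blast
    hence pP: "p \<in> P" using F_props(1)[of h] by (metis count_eq_zero_iff not_numeral_le_zero subsetD)
    have sub: "{#p, p#} \<subseteq># F h" using p
      by (metis count_le_replicate_mset_subset_eq numeral_2_eq_2 replicate_mset_0 replicate_mset_Suc)
    have e: "{#p, p#} + (F h - {#p, p#}) = F h" using sub by (rule subset_mset.add_diff_inverse)
    have "h = sum_mset ({#p, p#} + (F h - {#p, p#}))" unfolding e F_props(2) ..
    hence "h = p + p + sum_mset (F h - {#p, p#})" by (simp add: add.assoc)
    thus "\<exists>p\<in>P. \<exists>r. h = p + p + r" using pP by blast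
  qed
  thus ?thesis unfolding moebius_def by simp
qed

abbreviation Dv :: "'a \<Rightarrow> 'a set" where "Dv g \<equiv> {h. \<exists>r. g = h + r}"

lemma finite_Dv: "finite (Dv g)"
proof (rule finite_subset[OF _ finite_deg_le[of "deg g"]])
  show "Dv g \<subseteq> {h. deg h \<le> deg g}" by (auto simp: deg_add)
qed

lemma divisor_sum:
  fixes g :: 'a
  shows "(\<Sum>h\<in>Dv g. moebius P h) = (if g = 0 then 1 else 0)"
proof -
  define X where "X = set_mset (F g)"
  define phi :: "'a set \<Rightarrow> 'a" where "phi S = sum_mset (mset_set S)" for S
  have fX: "finite X" unfolding X_def by simp
  have XP: "X \<subseteq> P" unfolding X_def using F_props(1) .
  have Fphi: "F (phi S) = mset_set S" if "S \<subseteq> X" for S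
  proof -
    have "finite S" using that fX finite_subset by blast
    thus ?thesis unfolding phi_def using that XP by (intro F_unique) auto
  qed
  have muphi: "moebius P (phi S) = (-1) ^ card S" if "S \<subseteq> X" for S
  proof -
    have "finite S" using that fX finite_subset by blast
    thus ?thesis unfolding mu_alt Fphi[OF that] by (auto simp: count_mset_set')
  qed
  have inj: "inj_on phi (Pow X)"
  proof (rule inj_onI)
    fix S T assume "S \<in> Pow X" "T \<in> Pow X" "phi S = phi T"
    hence "mset_set S = mset_set T" "finite S" "finite T" using Fphi fX finite_subset by (metis PowD)+
    thus "S = T" by (metis finite_set_mset_mset_set)
  qed
  have img: "phi ` Pow X = {h \<in> Dv g. moebius P h \<noteq> 0}"
  proof (intro equalityI subsetI)
    fix h assume "h \<in> phi ` Pow X"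
    then obtain S where S: "S \<subseteq> X" "h = phi S" by auto
    have fS: "finite S" using S fX finite_subset by blast
    have sub: "mset_set S \<subseteq># F g"
    proof (rule mset_subset_eqI)
      fix x show "count (mset_set S) x \<le> count (F g) x"
        using S fS unfolding X_def by (auto simp: count_mset_set')
    qed
    have e: "mset_set S + (F g - mset_set S) = F g" using sub by (rule subset_mset.add_diff_inverse)
    have "g = sum_mset (mset_set S + (F g - mset_set S))" unfolding e F_props(2) ..
    hence "g = h + sum_mset (F g - mset_set S)" using S unfolding phi_def by simp
    thus "h \<in> {h \<in> Dv g. moebius P h \<noteq> 0}" using muphi S by auto
  next
    fix h assume h: "h \<in> {h \<in> Dv g. moebius P h \<noteq> 0}"
    then obtain r where r: "g = h + r" by blast
    have cnt: "\<forall>p. count (F h) p \<le> 1"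
    proof
      fix p
      have "\<not> 2 \<le> count (F h) p" using h unfolding mu_alt by (auto split: if_splits)
      thus "count (F h) p \<le> 1" by simp
    qed
    define S where "S = set_mset (F h)"
    have FS: "F h = mset_set S"
    proof (rule multiset_eqI)
      fix x show "count (F h) x = count (mset_set S) x"
      proof (cases "x \<in># F h")
        case True
        hence "count (F h) x > 0" by simp
        hence "count (F h) x = 1" using cnt[rule_format, of x] by linarith
        thus ?thesis using True unfolding S_def by (simp add: count_mset_set')
      next
        case False
        thus ?thesis unfolding S_def by (simp add: count_mset_set' not_in_iff)
      qed
    qed
    have "S \<subseteq> X" unfolding S_def X_def r F_add by simp
    moreover have "h = phi S" unfolding phi_def FS[symmetric] F_props(2) ..
    ultimately show "h \<in> phi ` Pow X" by auto
  qed
  have "(\<Sum>h\<in>Dv g. moebius P h) = (\<Sum>h\<in>{h \<in> Dv g. moebius P h \<noteq> 0}. moebius P h)"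
    by (rule sum.mono_neutral_right) (use finite_Dv in auto)
  also have "\<dots> = (\<Sum>S\<in>Pow X. moebius P (phi S))"
    unfolding img[symmetric] by (rule sum.reindex[OF inj, unfolded comp_def])
  also have "\<dots> = (\<Sum>S\<in>Pow X. (-1) ^ card S)"
    by (intro sum.cong refl muphi) auto
  also have "\<dots> = (if X = {} then 1 else 0)" by (rule sum_Pow_neg1[OF fX])
  also have "(X = {}) = (g = 0)"
    unfolding X_def by (metis F_props(2) F_zero set_mset_eq_empty_iff sum_mset.empty)
  finally show ?thesis .
qed

definition Mu :: "nat \<Rightarrow> int" where "Mu n = (\<Sum>g\<in>{g. deg g = n}. moebius P g)"

lemma C2: "(\<Sum>i\<le>n. Mu i * int (G (n - i))) = (if n = 0 then 1 else 0)"
proof -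
  define D where "D = {h. deg h \<le> n}"
  define Pr where "Pr = Sigma D (\<lambda>h. {r. deg r = n - deg h})"
  have fD: "finite D" unfolding D_def by (rule finite_deg_le)
  have fPr: "finite Pr" unfolding Pr_def using fD finite_deg by (intro finite_SigmaI) auto
  have "(\<Sum>i\<le>n. Mu i * int (G (n - i))) = (\<Sum>i\<le>n. \<Sum>h\<in>{h\<in>D. deg h = i}. moebius P h * int (G (n - deg h)))"
    unfolding Mu_def sum_distrib_right by (intro sum.cong refl) (auto simp: D_def)
  also have "\<dots> = (\<Sum>h\<in>D. moebius P h * int (G (n - deg h)))"
    by (rule sum.group) (use fD in \<open>auto simp: D_def\<close>)
  also have "\<dots> = (\<Sum>h\<in>D. \<Sum>r\<in>{r. deg r = n - deg h}. moebius P h)"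
    by (intro sum.cong refl) (simp add: Gcount_def)
  also have "\<dots> = (\<Sum>(h,r)\<in>Pr. moebius P h)"
    unfolding Pr_def by (rule sum.Sigma) (use fD finite_deg in auto)
  also have "\<dots> = (\<Sum>x\<in>Pr. moebius P (fst x))"
    by (simp add: split_beta)
  also have "\<dots> = (\<Sum>g\<in>{g. deg g = n}. \<Sum>x\<in>{x\<in>Pr. fst x + snd x = g}. moebius P (fst x))"
    by (rule sum.group[symmetric]) (use fPr finite_deg in \<open>auto simp: Pr_def D_def deg_add\<close>)
  also have "\<dots> = (\<Sum>g\<in>{g. deg g = n}. \<Sum>h\<in>Dv g. moebius P h)"
  proof (rule sum.cong[OF refl])
    fix g assume g: "g \<in> {g. deg g = n}"
    have eq: "{x\<in>Pr. fst x + snd x = g} = {x. fst x + snd x = g}"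
    proof (intro equalityI subsetI)
      fix x assume x: "x \<in> {x. fst x + snd x = g}"
      hence "deg (fst x) + deg (snd x) = n" using g deg_add[of "fst x" "snd x"] by simp
      thus "x \<in> {x\<in>Pr. fst x + snd x = g}" using x unfolding Pr_def D_def by (cases x) auto
    qed simp
    have inj: "inj_on fst {x. fst x + snd x = g}"
    proof (rule inj_onI)
      fix x y assume "x \<in> {x. fst x + snd x = g}" "y \<in> {x. fst x + snd x = g}" "fst x = fst y"
      hence "fst x + snd x = fst x + snd y" by simp
      hence "snd x = snd y" by (rule cancel)
      thus "x = y" using \<open>fst x = fst y\<close> by (simp add: prod_eq_iff)
    qed
    have img: "fst ` {x. fst x + snd x = g} = Dv g"
    proof (intro equalityI subsetI)
      fix h assume "h \<in> Dv g"
      then obtain r where "g = h + r" by blast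
      thus "h \<in> fst ` {x. fst x + snd x = g}" by (intro image_eqI[of _ _ "(h, r)"]) auto
    next
      fix h assume "h \<in> fst ` {x. fst x + snd x = g}"
      then obtain x where "h = fst x" "fst x + snd x = g" by blast
      thus "h \<in> Dv g" by blast
    qed
    have "(\<Sum>x\<in>{x. fst x + snd x = g}. moebius P (fst x)) = (\<Sum>h\<in>Dv g. moebius P h)"
      using sum.reindex[OF inj, of "moebius P"] unfolding img by simp
    thus "(\<Sum>x\<in>{x\<in>Pr. fst x + snd x = g}. moebius P (fst x)) = (\<Sum>h\<in>Dv g. moebius P h)"
      unfolding eq .
  qed
  also have "\<dots> = (\<Sum>g\<in>{g. deg g = n}. if g = 0 then 1 else 0)"
    by (intro sum.cong refl divisor_sum)
  also have "\<dots> = (if n = 0 then 1 else 0)"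
  proof (cases "n = 0")
    case True
    hence "{g. deg g = n} = {0}" using deg_eq_0_iff by auto
    thus ?thesis using True by simp
  next
    case False
    hence "0 \<notin> {g. deg g = n}" using deg_zero by auto
    thus ?thesis using False by (simp add: sum.neutral)
  qed
  finally show ?thesis .
qed

end

lemma conv_radius_bound:
  fixes f :: "nat \<Rightarrow> complex"
  assumes b: "b > 0" and bd: "\<And>n. norm (f n) \<le> K * b ^ n"
  shows "conv_radius f \<ge> ereal (1 / b)"
proof (rule conv_radius_geI_ex')
  fix r :: real assume r: "0 < r" "ereal r < ereal (1 / b)"
  have "r < 1 / b" using r(2) by simp
  hence br: "b * r < 1" using b by (simp add: pos_less_divide_eq mult.commute)
  have "summable (\<lambda>n. (b * r) ^ n)"
    using br r b by (intro summable_geometric) simp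
  hence sg: "summable (\<lambda>n. K * (b * r) ^ n)" by (rule summable_mult)
  have le: "norm (f n * complex_of_real r ^ n) \<le> K * (b * r) ^ n" for n
  proof -
    have "norm (f n * complex_of_real r ^ n) = norm (f n) * r ^ n"
      using r by (simp add: norm_mult norm_power)
    also have "\<dots> \<le> K * b ^ n * r ^ n" using bd[of n] r by (intro mult_right_mono) auto
    finally show ?thesis by (simp add: power_mult_distrib mult.assoc)
  qed
  show "summable (\<lambda>n. f n * complex_of_real r ^ n)"
    by (rule summable_comparison_test'[OF sg le])
qed


locale main = asg P deg for P :: "'a::comm_monoid_add set" and deg +
  fixes c q \<eta>0 :: real and Z :: "complex \<Rightarrow> complex"
  assumes c: "c > 0" and q: "q > 1" and e0: "0 \<le> \<eta>0" and e1: "\<eta>0 < 1"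
  and ax: "axiom_A_sharp deg c q \<eta>0"
  and hol: "Z holomorphic_on (ball 0 (q powr (-\<eta>0)) - {complex_of_real (1/q)})"
  and Zser: "\<forall>z\<in>ball 0 (1/q). Z z = (\<Sum>n. of_nat (Gcount deg n) * z^n)"
  and Zm: "Z (complex_of_real (-1/q)) \<noteq> 0"
begin

definition Cax where "Cax = (SOME C. \<forall>n. \<bar>real (G n) - c * q ^ n\<bar> \<le> C * q powr (\<eta>0 * real n))"

lemma Cax: "\<bar>real (G n) - c * q ^ n\<bar> \<le> Cax * q powr (\<eta>0 * real n)"
  using someI_ex[OF ax[unfolded axiom_A_sharp_def]] unfolding Cax_def by blast

definition K where "K = c + \<bar>Cax\<bar>"

lemma G_bound: "real (G n) \<le> K * q ^ n"
proof -
  have qp: "q powr (\<eta>0 * real n) \<le> q ^ n"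
  proof -
    have "q powr (\<eta>0 * real n) \<le> q powr (real n)" using q e0 e1
      by (intro powr_mono) (auto intro: mult_left_le_one_le)
    thus ?thesis using q by (simp add: powr_realpow)
  qed
  have "real (G n) \<le> c * q ^ n + Cax * q powr (\<eta>0 * real n)" using Cax[of n] by linarith
  also have "\<dots> \<le> c * q ^ n + \<bar>Cax\<bar> * q ^ n"
  proof (intro add_left_mono)
    have "Cax * q powr (\<eta>0 * real n) \<le> \<bar>Cax\<bar> * q powr (\<eta>0 * real n)"
      by (intro mult_right_mono) auto
    also have "\<dots> \<le> \<bar>Cax\<bar> * q ^ n" using qp by (intro mult_left_mono) auto
    finally show "Cax * q powr (\<eta>0 * real n) \<le> \<bar>Cax\<bar> * q ^ n" .
  qed
  finally show ?thesis by (simp add: K_def algebra_simps)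
qed

lemma Mu_bound: "\<bar>real_of_int (Mu n)\<bar> \<le> real (G n)"
proof -
  have "\<bar>Mu n\<bar> \<le> (\<Sum>g\<in>{g. deg g = n}. \<bar>moebius P g\<bar>)" unfolding Mu_def by (rule sum_abs)
  also have "\<dots> \<le> (\<Sum>g\<in>{g. deg g = n}. 1)"
    by (intro sum_mono) (auto simp: moebius_def)
  finally have "\<bar>Mu n\<bar> \<le> int (G n)" by (simp add: Gcount_def)
  thus ?thesis by linarith
qed

lemma Lam_bound: assumes False: "n \<noteq> 0" shows "Lam n \<le> n * G n"
proof -
  have "Lam n * G (n - n) \<le> (\<Sum>k\<in>{1..n}. Lam k * G (n - k))"
    using False by (intro member_le_sum) auto
  thus ?thesis using C1[of n] by (simp add: G0)
qed

definition GF :: "complex fps" where "GF = Abs_fps (\<lambda>n. of_nat (G n))"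
definition MF :: "complex fps" where "MF = Abs_fps (\<lambda>n. of_int (Mu n))"
definition LF :: "complex fps" where "LF = Abs_fps (\<lambda>n. if n = 0 then 0 else of_real (real (Lam n) / real n))"
definition HF :: "complex fps" where "HF = Abs_fps (\<lambda>n. of_real (real (G n) - c * q ^ n))"

lemma K_nonneg: "K \<ge> 0" unfolding K_def using c by simp

lemma rad_GF: "fps_conv_radius GF \<ge> ereal (1/q)"
  unfolding fps_conv_radius_def GF_def using q G_bound by (intro conv_radius_bound) auto

lemma rad_MF: "fps_conv_radius MF \<ge> ereal (1/q)"
  unfolding fps_conv_radius_def MF_def using q
  by (intro conv_radius_bound[where K = K]) (auto intro: order.trans[OF Mu_bound G_bound])

lemma rad_LF: "fps_conv_radius LF \<ge> ereal (1/q)"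
  unfolding fps_conv_radius_def LF_def using q
proof (intro conv_radius_bound[where K = K])
  fix n
  have "norm (if n = 0 then 0 else complex_of_real (real (Lam n) / real n)) \<le> real (G n)"
  proof (cases "n = 0")
    case False
    have "real (Lam n) \<le> real n * real (G n)" using Lam_bound[OF False] by (metis of_nat_le_iff of_nat_mult)
    hence "real (Lam n) / real n \<le> real (G n)" using False by (simp add: divide_le_eq mult.commute)
    moreover have "norm (complex_of_real (real (Lam n) / real n)) = real (Lam n) / real n"
      by (simp only: norm_of_real) simp
    ultimately show ?thesis using False by simp
  qed simp
  thus "norm (fps_nth (Abs_fps (\<lambda>n. if n = 0 then 0 else complex_of_real (real (Lam n) / real n))) n) \<le> K * q ^ n"
    using G_bound[of n] by simp
qed simp

lemma rad_HF: "fps_conv_radius HF \<ge> ereal (q powr (-\<eta>0))"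
proof -
  have b: "q powr \<eta>0 > 0" using q by simp
  have "fps_conv_radius HF \<ge> ereal (1 / q powr \<eta>0)"
    unfolding fps_conv_radius_def HF_def
  proof (intro conv_radius_bound[OF b, where K = Cax])
    fix n
    have "norm (complex_of_real (real (G n) - c * q ^ n)) \<le> Cax * q powr (\<eta>0 * real n)"
      using Cax[of n] by (simp only: norm_of_real)
    also have "q powr (\<eta>0 * real n) = (q powr \<eta>0) ^ n" using q by (subst powr_power) (auto simp: mult.commute)
    finally show "norm (fps_nth (Abs_fps (\<lambda>n. complex_of_real (real (G n) - c * q ^ n))) n) \<le> Cax * (q powr \<eta>0) ^ n"
      by simp
  qed
  thus ?thesis using q by (simp add: powr_minus_divide)
qed

lemma mult_div: "(m::nat) > 0 \<Longrightarrow> of_nat m * complex_of_real (real L / real m) = of_nat L"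
  by simp

lemma MF_GF: "MF * GF = 1"
proof (rule fps_ext)
  fix n
  have "(MF * GF) $ n = (\<Sum>i=0..n. of_int (Mu i) * of_nat (G (n - i)))"
    by (simp add: fps_mult_nth MF_def GF_def)
  also have "\<dots> = of_int (\<Sum>i\<le>n. Mu i * int (G (n - i)))" by (simp add: atLeast0AtMost)
  also have "\<dots> = fps_nth (1::complex fps) n" unfolding C2 by simp
  finally show "fps_nth (MF * GF) n = fps_nth (1::complex fps) n" .
qed

lemma deriv_GF: "fps_deriv GF = fps_deriv LF * GF"
proof (rule fps_ext)
  fix n
  have shift: "(\<Sum>i=0..n. Lam (Suc i) * G (n - i)) = (\<Sum>k=1..Suc n. Lam k * G (Suc n - k))"
    unfolding One_nat_def sum.shift_bounds_cl_Suc_ivl by simp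
  have "(fps_deriv LF * GF) $ n = (\<Sum>i=0..n. of_nat (Suc i) * of_real (real (Lam (Suc i)) / real (Suc i)) * of_nat (G (n - i)))"
    by (simp add: fps_mult_nth LF_def GF_def fps_deriv_def)
  also have "\<dots> = (\<Sum>i=0..n. of_nat (Lam (Suc i) * G (n - i)))"
  proof (intro sum.cong refl)
    fix i
    have h: "of_nat (Suc i) * complex_of_real (real (Lam (Suc i)) / real (Suc i)) = of_nat (Lam (Suc i))"
      by (rule mult_div) simp
    show "of_nat (Suc i) * complex_of_real (real (Lam (Suc i)) / real (Suc i)) * of_nat (G (n - i)) = of_nat (Lam (Suc i) * G (n - i))"
      by (simp only: of_nat_mult h)
  qed
  also have "\<dots> = of_nat (\<Sum>k=1..Suc n. Lam k * G (Suc n - k))"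
    unfolding shift[symmetric] by simp
  also have "\<dots> = of_nat (Suc n * G (Suc n))" unfolding C1 ..
  also have "\<dots> = fps_deriv GF $ n" by (simp add: GF_def fps_deriv_def algebra_simps)
  finally show "fps_deriv GF $ n = (fps_deriv LF * GF) $ n" ..
qed

end

lemma ereal_lt_rad: "norm (z::complex) < r \<Longrightarrow> ereal r \<le> R \<Longrightarrow> ereal (norm z) < R"
  by (rule order.strict_trans2[of _ "ereal r"]) simp_all

context main
begin

abbreviation R0 where "R0 \<equiv> 1 / q"
abbreviation R1 where "R1 \<equiv> q powr (-\<eta>0)"

lemma R0_pos: "R0 > 0" using q by simp

lemma R0_R1: "R0 < R1"
proof -
  have "q powr (-1) < q powr (-\<eta>0)" using q e1 by (intro powr_less_mono) auto
  thus ?thesis using q by (simp add: powr_minus_divide)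
qed

lemma Zeq: "norm z < R0 \<Longrightarrow> Z z = eval_fps GF z"
  using Zser unfolding eval_fps_def GF_def by simp

lemma exp_L:
  assumes z: "norm z < R0"
  shows "eval_fps GF z = exp (eval_fps LF z)"
proof -
  define h where "h z = eval_fps GF z * exp (- eval_fps LF z)" for z
  have "\<exists>k. \<forall>x\<in>ball 0 R0. h x = k"
  proof (rule has_field_derivative_zero_constant)
    fix x :: complex assume x: "x \<in> ball 0 R0"
    hence nx: "norm x < R0" by simp
    have rG: "ereal (norm x) < fps_conv_radius GF" by (rule ereal_lt_rad[OF nx rad_GF])
    have rL: "ereal (norm x) < fps_conv_radius LF" by (rule ereal_lt_rad[OF nx rad_LF])
    have rL': "ereal (norm x) < fps_conv_radius (fps_deriv LF)"
      using rL fps_conv_radius_deriv[of LF] by (rule order.strict_trans2)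
    have dG: "(eval_fps GF has_field_derivative eval_fps (fps_deriv GF) x) (at x within ball 0 R0)"
      by (rule has_field_derivative_eval_fps[OF rG])
    have dL: "(eval_fps LF has_field_derivative eval_fps (fps_deriv LF) x) (at x within ball 0 R0)"
      by (rule has_field_derivative_eval_fps[OF rL])
    have eq: "eval_fps (fps_deriv GF) x = eval_fps (fps_deriv LF) x * eval_fps GF x"
      unfolding deriv_GF by (rule eval_fps_mult[OF rL' rG])
    have "(h has_field_derivative eval_fps GF x * (exp (- eval_fps LF x) * - eval_fps (fps_deriv LF) x)
             + eval_fps (fps_deriv GF) x * exp (- eval_fps LF x)) (at x within ball 0 R0)"
      unfolding h_def by (rule DERIV_mult'[OF dG DERIV_chain2[OF DERIV_exp DERIV_minus[OF dL]]])
    thus "(h has_field_derivative 0) (at x within ball 0 R0)"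
      by (rule DERIV_cong) (simp add: eq algebra_simps)
  qed simp
  then obtain k where k: "\<forall>x\<in>ball 0 R0. h x = k" by blast
  have "h 0 = 1" unfolding h_def by (simp add: eval_fps_at_0 GF_def LF_def G0)
  hence "k = 1" using k R0_pos by force
  hence "h z = 1" using k z by simp
  hence "eval_fps GF z * exp (- eval_fps LF z) * exp (eval_fps LF z) = exp (eval_fps LF z)"
    unfolding h_def by simp
  thus ?thesis by (simp add: exp_minus field_simps)
qed

definition a :: "nat \<Rightarrow> real" where "a n = (if n = 0 then 0 else real (Lam n) / real n)"

lemma a_nonneg: "a n \<ge> 0" unfolding a_def by simp

lemma LF_nth: "fps_nth LF n = of_real (a n)" unfolding LF_def a_def by simp

lemma Re_L:
  assumes "norm z < R0"
  shows "(\<lambda>n. a n * Re (z ^ n)) sums Re (eval_fps LF z)"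
proof -
  have "(\<lambda>n. fps_nth LF n * z ^ n) sums eval_fps LF z"
    by (rule sums_eval_fps[OF ereal_lt_rad[OF assms rad_LF]])
  hence "(\<lambda>n. Re (fps_nth LF n * z ^ n)) sums Re (eval_fps LF z)"
    by (simp add: sums_complex_iff)
  thus ?thesis by (simp add: LF_nth)
qed

lemma Re_scale: "Re ((complex_of_real r * u) ^ n) = r ^ n * Re (u ^ n)"
  by (simp add: power_mult_distrib flip: of_real_power)

lemma trig_ineq:
  fixes u :: complex assumes "norm u = 1"
  shows "3 + 4 * Re u + Re (u ^ 2) \<ge> 0"
proof -
  have "Re u ^ 2 + Im u ^ 2 = 1" using assms by (simp add: cmod_def)
  moreover have "Re (u ^ 2) = Re u ^ 2 - Im u ^ 2" by (simp add: power2_eq_square)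
  ultimately have "3 + 4 * Re u + Re (u ^ 2) = 2 * (1 + Re u) ^ 2" by (simp add: power2_eq_square algebra_simps)
  thus ?thesis by simp
qed

lemma ineq341:
  assumes r: "0 < r" "r < R0" and w: "norm w = 1"
  shows "norm (Z (of_real r)) ^ 3 * norm (Z (of_real r * w)) ^ 4 * norm (Z (of_real r * w ^ 2)) \<ge> 1"
proof -
  let ?z1 = "complex_of_real r" and ?z2 = "complex_of_real r * w" and ?z3 = "complex_of_real r * w ^ 2"
  have n1: "norm ?z1 < R0" and n2: "norm ?z2 < R0" and n3: "norm ?z3 < R0"
    using r w by (auto simp: norm_mult norm_power)
  have s: "(\<lambda>n. 3 * (a n * Re (?z1 ^ n)) + 4 * (a n * Re (?z2 ^ n)) + a n * Re (?z3 ^ n)) sums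
      (3 * Re (eval_fps LF ?z1) + 4 * Re (eval_fps LF ?z2) + Re (eval_fps LF ?z3))"
    by (intro sums_add sums_mult Re_L n1 n2 n3)
  have "0 \<le> 3 * Re (eval_fps LF ?z1) + 4 * Re (eval_fps LF ?z2) + Re (eval_fps LF ?z3)"
  proof (rule sums_le[OF _ sums_zero s])
    fix n
    have "3 * (a n * Re (?z1 ^ n)) + 4 * (a n * Re (?z2 ^ n)) + a n * Re (?z3 ^ n)
          = a n * r ^ n * (3 + 4 * Re (w ^ n) + Re ((w ^ n) ^ 2))"
    proof -
      have e1: "Re (?z1 ^ n) = r ^ n" by (simp flip: of_real_power)
      have e2: "Re (?z2 ^ n) = r ^ n * Re (w ^ n)" by (rule Re_scale)
      have e3: "Re (?z3 ^ n) = r ^ n * Re ((w ^ n) ^ 2)"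
        unfolding Re_scale by (simp add: power_mult[symmetric] mult.commute)
      show ?thesis unfolding e1 e2 e3 by (simp add: algebra_simps)
    qed
    also have "\<dots> \<ge> 0"
      using a_nonneg r w by (intro mult_nonneg_nonneg trig_ineq) (auto simp: norm_power)
    finally show "0 \<le> 3 * (a n * Re (?z1 ^ n)) + 4 * (a n * Re (?z2 ^ n)) + a n * Re (?z3 ^ n)" .
  qed
  hence "1 \<le> exp (3 * Re (eval_fps LF ?z1) + 4 * Re (eval_fps LF ?z2) + Re (eval_fps LF ?z3))" by simp
  also have "\<dots> = exp (Re (eval_fps LF ?z1)) ^ 3 * exp (Re (eval_fps LF ?z2)) ^ 4 * exp (Re (eval_fps LF ?z3))"
    by (simp add: exp_add exp_of_nat_mult[symmetric])
  also have "\<dots> = norm (Z ?z1) ^ 3 * norm (Z ?z2) ^ 4 * norm (Z ?z3)"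
    using n1 n2 n3 by (simp add: Zeq exp_L)
  finally show ?thesis .
qed

end

context main
begin

definition H where "H = eval_fps HF"
definition D where "D z = complex_of_real c + (1 - complex_of_real q * z) * H z" for z

lemma norm_inv_q [simp]: "cmod (1 / complex_of_real q) = R0"
  using q by (simp add: norm_divide)

lemma R1_pos: "R1 > 0" using q by simp

lemma ball_R1_rad: "ball (0::complex) R1 \<subseteq> eball 0 (fps_conv_radius HF)"
proof
  fix z :: complex assume "z \<in> ball 0 R1"
  hence "norm z < R1" by simp
  hence "ereal (norm z) < fps_conv_radius HF" by (rule ereal_lt_rad[OF _ rad_HF])
  thus "z \<in> eball 0 (fps_conv_radius HF)" by simp
qed

lemma H_hol: "H holomorphic_on ball 0 R1"
  unfolding H_def by (rule holomorphic_on_eval_fps[OF ball_R1_rad])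

lemma D_hol: "D holomorphic_on ball 0 R1"
  unfolding D_def[abs_def] by (intro holomorphic_intros H_hol)

lemma one_minus_qz: "norm z < R0 \<Longrightarrow> 1 - complex_of_real q * z \<noteq> 0"
proof
  assume "norm z < R0" "1 - complex_of_real q * z = 0"
  hence "complex_of_real q * z = 1" by simp
  hence "q * norm z = 1" using q by (metis norm_mult norm_of_real norm_one abs_of_pos less_trans zero_less_one)
  thus False using \<open>norm z < R0\<close> q by (simp add: field_simps)
qed

lemma Z_split:
  assumes z: "norm z < R0"
  shows "Z z = c / (1 - complex_of_real q * z) + H z"
proof -
  have nq: "norm (complex_of_real q * z) < 1" using z q by (simp add: norm_mult field_simps)
  have s1: "(\<lambda>n. fps_nth HF n * z ^ n) sums H z"
    unfolding H_def by (rule sums_eval_fps[OF ereal_lt_rad[OF _ rad_HF]]) (use z R0_R1 in simp)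
  have s2: "(\<lambda>n. complex_of_real c * (complex_of_real q * z) ^ n) sums (c * (1 / (1 - complex_of_real q * z)))"
    by (intro sums_mult geometric_sums nq)
  have "(\<lambda>n. fps_nth HF n * z ^ n + complex_of_real c * (complex_of_real q * z) ^ n) sums
        (H z + c * (1 / (1 - complex_of_real q * z)))"
    by (rule sums_add[OF s1 s2])
  moreover have "(\<lambda>n. fps_nth HF n * z ^ n + complex_of_real c * (complex_of_real q * z) ^ n)
                 = (\<lambda>n. fps_nth GF n * z ^ n)"
    by (rule ext) (simp add: HF_def GF_def power_mult_distrib algebra_simps)
  moreover have "(\<lambda>n. fps_nth GF n * z ^ n) sums Z z"
    unfolding Zeq[OF z] by (rule sums_eval_fps[OF ereal_lt_rad[OF z rad_GF]])
  ultimately have "Z z = H z + c * (1 / (1 - complex_of_real q * z))"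
    using sums_unique2 by metis
  thus ?thesis by simp
qed

lemma D_Z:
  assumes z: "z \<in> ball 0 R1" "z \<noteq> complex_of_real (1/q)"
  shows "D z = (1 - complex_of_real q * z) * Z z"
proof -
  have nz: "1 - complex_of_real q * w \<noteq> 0" if "w \<noteq> complex_of_real (1/q)" for w
  proof
    assume "1 - complex_of_real q * w = 0"
    hence "w = complex_of_real (1/q)" using q by (simp add: field_simps)
    thus False using that by simp
  qed
  have "Z z = c / (1 - complex_of_real q * z) + H z"
  proof (rule analytic_continuation_open[where s = "ball 0 R0" and s' = "ball 0 R1 - {complex_of_real (1/q)}"
     and f = Z and g = "\<lambda>z. c / (1 - complex_of_real q * z) + H z"])
    show "open (ball (0::complex) R0)" by simp
    show "open (ball 0 R1 - {complex_of_real (1/q)})" by auto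
    show "ball (0::complex) R0 \<noteq> {}" using R0_pos by simp
    show "connected (ball 0 R1 - {complex_of_real (1/q)})"
      by (rule connected_punctured_convex) (use R1_pos in \<open>auto simp: aff_dim_open\<close>)
    show "ball 0 R0 \<subseteq> ball 0 R1 - {complex_of_real (1/q)}" using R0_R1 q by auto
    show "Z holomorphic_on ball 0 R1 - {complex_of_real (1/q)}" using hol by simp
    show "(\<lambda>z. c / (1 - complex_of_real q * z) + H z) holomorphic_on ball 0 R1 - {complex_of_real (1/q)}"
      by (intro holomorphic_intros holomorphic_on_subset[OF H_hol]) (use nz in auto)
    show "z \<in> ball 0 R1 - {complex_of_real (1/q)}" using z by simp
    fix w :: complex assume "w \<in> ball 0 R0"
    thus "Z w = c / (1 - complex_of_real q * w) + H w" by (intro Z_split) simp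
  qed
  thus ?thesis unfolding D_def using nz[OF z(2)] by (simp add: field_simps)
qed

lemma D_inside:
  assumes z: "norm z < R0" shows "D z = (1 - complex_of_real q * z) * exp (eval_fps LF z)"
proof -
  have "z \<in> ball 0 R1" using z R0_R1 by simp
  moreover have "z \<noteq> complex_of_real (1/q)" using z q by auto
  ultimately show ?thesis using D_Z[of z] z by (simp add: Zeq exp_L)
qed

lemma D_nz_inside: "norm z < R0 \<Longrightarrow> D z \<noteq> 0"
  using D_inside one_minus_qz by simp

lemma D_pole: "D (complex_of_real (1/q)) \<noteq> 0"
  unfolding D_def using q c by simp

lemma D_minus: "D (complex_of_real (-1/q)) \<noteq> 0"
proof -
  have "norm (complex_of_real (-1/q)) = R0" using q by (simp only: norm_of_real) simp
  hence "complex_of_real (-1/q) \<in> ball 0 R1" using R0_R1 by simp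
  moreover have "complex_of_real (-1/q) \<noteq> complex_of_real (1/q)" using q by simp
  ultimately have "D (complex_of_real (-1/q)) = (1 - complex_of_real q * complex_of_real (-1/q)) * Z (complex_of_real (-1/q))"
    by (rule D_Z)
  also have "\<dots> = 2 * Z (complex_of_real (-1/q))" using q by simp
  finally show ?thesis using Zm by simp
qed

end

context main
begin

lemma D_isCont: "x \<in> ball 0 R1 \<Longrightarrow> isCont D x"
  using holomorphic_on_imp_continuous_on[OF D_hol]
  by (simp add: continuous_on_eq_continuous_at)

lemma ofreal_at_left: "filterlim complex_of_real (at (complex_of_real x)) (at_left x)"
proof -
  have "((\<lambda>r. complex_of_real r) \<longlongrightarrow> complex_of_real x) (at_left x)"
    by (intro tendsto_intros)
  moreover have "eventually (\<lambda>r. complex_of_real r \<in> UNIV \<and> complex_of_real r \<noteq> complex_of_real x) (at_left x)"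
    by (simp add: eventually_at_filter)
  ultimately show ?thesis unfolding filterlim_at by simp
qed

lemma D_circle:
  assumes zn: "norm z = R0" and z1: "z \<noteq> complex_of_real (1/q)" and z2: "z \<noteq> complex_of_real (-1/q)"
  shows "D z \<noteq> 0"
proof
  assume Dz: "D z = 0"
  define w where "w = complex_of_real q * z"
  have wn: "norm w = 1" unfolding w_def using zn q by (simp add: norm_mult)
  have zw: "complex_of_real R0 * w = z" unfolding w_def using q by simp
  have w1: "w \<noteq> 1"
  proof
    assume "w = 1" hence "z = complex_of_real (1/q)" using zw by simp
    thus False using z1 by simp
  qed
  have w2: "w \<noteq> -1"
  proof
    assume "w = -1" hence "z = complex_of_real (-1/q)" using zw by simp
    thus False using z2 by simp
  qed
  have w3: "w ^ 2 \<noteq> 1" using w1 w2 by (simp add: power2_eq_1_iff)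
  have zball: "z \<in> ball 0 R1" using zn R0_R1 by simp
  define phi where "phi x = D (x * w)" for x
  obtain D' where dD: "(D has_field_derivative D') (at z)"
    using holomorphic_on_imp_differentiable_at[OF D_hol _ zball] by (auto simp: field_differentiable_def)
  have dphi: "(phi has_field_derivative D' * w) (at (complex_of_real R0))"
    unfolding phi_def
  proof (rule DERIV_chain2[of D])
    show "DERIV D (complex_of_real R0 * w) :> D'" using dD zw by simp
    show "((\<lambda>x. x * w) has_field_derivative w) (at (complex_of_real R0))"
      by (rule derivative_eq_intros refl | simp)+
  qed
  have phi0: "phi (complex_of_real R0) = 0" unfolding phi_def zw Dz ..
  define quot where "quot r = (phi (complex_of_real r) - phi (complex_of_real R0)) / (complex_of_real r - complex_of_real R0)" for r
  have lim_quot: "(quot \<longlongrightarrow> D' * w) (at_left R0)"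
  proof -
    have "((\<lambda>y. (phi y - phi (complex_of_real R0)) / (y - complex_of_real R0)) \<longlongrightarrow> D' * w) (at (complex_of_real R0))"
      using dphi by (simp add: has_field_derivative_iff)
    from filterlim_compose[OF this ofreal_at_left] show ?thesis unfolding quot_def .
  qed
  define g where "g r = norm (1 - complex_of_real q * complex_of_real r * w) ^ 4 * norm (1 - complex_of_real q * complex_of_real r * w ^ 2)" for r
  define f where "f r = (1 - q * r) * (norm (D (complex_of_real r)) ^ 3 * norm (quot r) ^ 4 / q ^ 4 * norm (D (complex_of_real r * w ^ 2)))" for r
  have ev: "eventually (\<lambda>r. g r \<le> f r) (at_left R0)"
    using eventually_at_left_real[OF R0_pos]
  proof (rule eventually_mono)
    fix r assume "r \<in> {0<..<R0}"
    hence r: "0 < r" "r < R0" by auto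
    define x1 where "x1 = complex_of_real r"
    define x2 where "x2 = complex_of_real r * w"
    define x3 where "x3 = complex_of_real r * w ^ 2"
    have n1: "norm x1 < R0" and n2: "norm x2 < R0" and n3: "norm x3 < R0"
      using r wn unfolding x1_def x2_def x3_def by (auto simp: norm_mult norm_power)
    have hZ: "norm (Z x) = norm (D x) / norm (1 - complex_of_real q * x)" if "norm x < R0" for x
    proof -
      have "x \<in> ball 0 R1" using that R0_R1 by simp
      moreover have "x \<noteq> complex_of_real (1/q)" using that q by auto
      ultimately have "D x = (1 - complex_of_real q * x) * Z x" by (rule D_Z)
      thus ?thesis using one_minus_qz[OF that] by (simp add: norm_mult)
    qed
    define t where "t = 1 - q * r"
    have t: "t > 0" unfolding t_def using r q by (simp add: field_simps)
    have nt: "norm (1 - complex_of_real q * x1) = t"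
    proof -
      have "1 - complex_of_real q * x1 = complex_of_real t" unfolding x1_def t_def by simp
      thus ?thesis using t by simp
    qed
    define m2 where "m2 = norm (1 - complex_of_real q * x2)"
    define m3 where "m3 = norm (1 - complex_of_real q * x3)"
    have m2: "m2 > 0" unfolding m2_def using one_minus_qz[OF n2] by simp
    have m3: "m3 > 0" unfolding m3_def using one_minus_qz[OF n3] by simp
    have gr: "g r = m2 ^ 4 * m3" unfolding g_def m2_def m3_def x2_def x3_def by (simp add: mult.assoc)
    define A where "A = norm (D x1)"
    define B where "B = norm (D x2)"
    define C where "C = norm (D x3)"
    define Qn where "Qn = norm (quot r)"
    have B: "B = Qn * t / q"
    proof -
      have "quot r = D x2 / (complex_of_real r - complex_of_real R0)"
        unfolding quot_def phi0 unfolding phi_def x2_def by simp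
      also have "complex_of_real r - complex_of_real R0 = complex_of_real (r - R0)" by (rule of_real_diff[symmetric])
      finally have "Qn = B / norm (complex_of_real (r - R0))" unfolding Qn_def B_def by (simp only: norm_divide)
      hence "Qn = B / \<bar>r - R0\<bar>" by (simp only: norm_of_real)
      moreover have "\<bar>r - R0\<bar> = t / q" unfolding t_def using r q by (simp add: field_simps)
      ultimately show ?thesis using t q by (simp add: field_simps)
    qed
    have fr: "f r = t * (A ^ 3 * Qn ^ 4 / q ^ 4 * C)"
      unfolding f_def t_def A_def C_def Qn_def x1_def x3_def ..
    have "1 \<le> (A / t) ^ 3 * (B / m2) ^ 4 * (C / m3)"
      using ineq341[OF r wn] unfolding hZ[OF n1, unfolded x1_def] hZ[OF n2, unfolded x2_def] hZ[OF n3, unfolded x3_def]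
      unfolding A_def B_def C_def m2_def m3_def nt[unfolded x1_def] x1_def x2_def x3_def .
    hence "t ^ 3 * (m2 ^ 4 * m3) * 1 \<le> t ^ 3 * (m2 ^ 4 * m3) * ((A / t) ^ 3 * (B / m2) ^ 4 * (C / m3))"
      using t m2 m3 by (intro mult_left_mono) auto
    also have "\<dots> = A ^ 3 * B ^ 4 * C" using t m2 m3 by (simp add: field_simps)
    also have "\<dots> = t ^ 3 * f r" unfolding fr B using t q by (simp add: field_simps numeral_eq_Suc)
    finally have "t ^ 3 * g r \<le> t ^ 3 * f r" unfolding gr by simp
    thus "g r \<le> f r" using t by simp
  qed
  have lim_g: "(g \<longlongrightarrow> norm (1 - w) ^ 4 * norm (1 - w ^ 2)) (at_left R0)"
  proof -
    have "(g \<longlongrightarrow> norm (1 - complex_of_real q * complex_of_real R0 * w) ^ 4 * norm (1 - complex_of_real q * complex_of_real R0 * w ^ 2)) (at_left R0)"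
      unfolding g_def by (intro tendsto_intros)
    thus ?thesis using q by simp
  qed
  have lim_f: "(f \<longlongrightarrow> 0) (at_left R0)"
  proof -
    have c1: "((\<lambda>r. D (complex_of_real r)) \<longlongrightarrow> D (complex_of_real R0)) (at_left R0)"
      by (intro isCont_tendsto_compose[OF D_isCont] tendsto_intros) (use R0_R1 in simp)
    have c2: "((\<lambda>r. D (complex_of_real r * w ^ 2)) \<longlongrightarrow> D (complex_of_real R0 * w ^ 2)) (at_left R0)"
      by (intro isCont_tendsto_compose[OF D_isCont] tendsto_intros) (use R0_R1 wn q in \<open>simp add: norm_mult norm_power norm_divide\<close>)
    have "(f \<longlongrightarrow> (1 - q * R0) * (norm (D (complex_of_real R0)) ^ 3 * norm (D' * w) ^ 4 / q ^ 4 * norm (D (complex_of_real R0 * w ^ 2)))) (at_left R0)"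
      unfolding f_def by (intro tendsto_intros c1 c2 lim_quot) (use q in simp)
    thus ?thesis using q by simp
  qed
  have "norm (1 - w) ^ 4 * norm (1 - w ^ 2) \<le> 0"
    by (rule tendsto_le[OF trivial_limit_at_left_real lim_f lim_g ev])
  moreover have "norm (1 - w) ^ 4 * norm (1 - w ^ 2) > 0" using w1 w3 by simp
  ultimately show False by simp
qed

end

lemma half_lt: "a < (b::real) \<Longrightarrow> (a + b) / 2 < b" by simp

lemma abs_div_mul: "a > 0 \<Longrightarrow> (t::real) > 0 \<Longrightarrow> \<bar>a / t\<bar> * t = a" by simp

lemma abs_one_minus: "(t::real) > 0 \<Longrightarrow> a < t \<Longrightarrow> \<bar>1 - a / t\<bar> * t = t - a"
proof -
  assume t: "t > 0" and a: "a < t"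
  hence "a / t < 1" by simp
  hence e: "\<bar>1 - a / t\<bar> = 1 - a / t" by simp
  show ?thesis unfolding e using t by (simp add: left_diff_distrib)
qed

context main
begin

lemma D_nz_cball: "norm z \<le> R0 \<Longrightarrow> D z \<noteq> 0"
proof -
  assume z: "norm z \<le> R0"
  show "D z \<noteq> 0"
  proof (cases "norm z < R0")
    case True thus ?thesis by (rule D_nz_inside)
  next
    case False
    hence zn: "norm z = R0" using z by simp
    show ?thesis
    proof (cases "z = complex_of_real (1/q)")
      case True thus ?thesis using D_pole by simp
    next
      case F1: False
      show ?thesis
      proof (cases "z = complex_of_real (-1/q)")
        case True thus ?thesis using D_minus by simp
      next
        case False thus ?thesis using D_circle[OF zn F1] by simp
      qed
    qed
  qed
qed

lemma exists_rho: "\<exists>\<rho>. R0 < \<rho> \<and> \<rho> \<le> 1 \<and> \<rho> < R1 \<and> (\<forall>z. norm z \<le> \<rho> \<longrightarrow> D z \<noteq> 0)"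
proof -
  define S where "S = ball 0 R1 \<inter> D -` (- {0})"
  have oS: "open S" unfolding S_def
    by (rule continuous_open_preimage[OF holomorphic_on_imp_continuous_on[OF D_hol]]) auto
  have sub: "cball 0 R0 \<subseteq> S" unfolding S_def using D_nz_cball R0_R1 by auto
  obtain e where e: "e > 0" "(\<Union>x\<in>cball 0 R0. ball x e) \<subseteq> S"
    using compact_subset_open_imp_ball_epsilon_subset[OF compact_cball oS sub] by blast
  have ballS: "ball 0 (R0 + e) \<subseteq> S"
  proof
    fix y :: complex assume "y \<in> ball 0 (R0 + e)"
    hence y: "norm y < R0 + e" by simp
    show "y \<in> S"
    proof (cases "norm y \<le> R0")
      case True
      have "y \<in> (\<Union>x\<in>cball 0 R0. ball x e)" using True e(1) by (intro UN_I[of y]) auto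
      thus ?thesis using e(2) by blast
    next
      case False
      hence ny: "norm y > R0" by simp
      hence ny0: "norm y > 0" using R0_pos by linarith
      define x where "x = complex_of_real (R0 / norm y) * y"
      have y0: "y \<noteq> 0" using ny0 by auto
      have "norm x = \<bar>R0 / norm y\<bar> * norm y" unfolding x_def by (simp only: norm_mult norm_of_real)
      hence nx: "norm x = R0" using abs_div_mul[OF R0_pos ny0] by simp
      have "y - x = complex_of_real (1 - R0 / norm y) * y" unfolding x_def by (simp add: algebra_simps)
      hence "norm (y - x) = \<bar>1 - R0 / norm y\<bar> * norm y" by (simp only: norm_mult norm_of_real)
      also have "\<dots> = norm y - R0" by (rule abs_one_minus[OF ny0 ny])
      finally have "dist x y < e" using y by (simp add: dist_norm norm_minus_commute)
      hence "y \<in> ball x e" by simp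
      moreover have "x \<in> cball 0 R0" using nx by simp
      ultimately have "y \<in> (\<Union>x\<in>cball 0 R0. ball x e)" by blast
      thus ?thesis using e(2) by blast
    qed
  qed
  define \<rho> where "\<rho> = min (min (R0 + e / 2) ((R0 + R1) / 2)) 1"
  have h: "(R0 + R1) / 2 < R1" by (rule half_lt[OF R0_R1])
  have "R0 < 1" using q by simp
  hence "R0 < \<rho>" unfolding \<rho>_def using e R0_R1 by simp
  moreover have "\<rho> \<le> 1" unfolding \<rho>_def by simp
  moreover have "\<rho> < R1" unfolding \<rho>_def by (intro min.strict_coboundedI1 min.strict_coboundedI2 h)
  moreover have "\<forall>z. norm z \<le> \<rho> \<longrightarrow> D z \<noteq> 0"
  proof (intro allI impI)
    fix z :: complex assume "norm z \<le> \<rho>"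
    hence "z \<in> ball 0 (R0 + e)" unfolding \<rho>_def using e by simp
    thus "D z \<noteq> 0" using ballS unfolding S_def by auto
  qed
  ultimately show ?thesis by blast
qed

lemma MF_expansion: "(\<lambda>z. (1 - complex_of_real q * z) / D z) has_fps_expansion MF"
  unfolding has_fps_expansion_def
proof
  show "0 < fps_conv_radius MF" using rad_MF R0_pos by (metis ereal_less(2) order.strict_trans2)
  have "eventually (\<lambda>z. z \<in> ball 0 R0) (nhds (0::complex))"
    using R0_pos by (intro eventually_nhds_in_open) auto
  thus "eventually (\<lambda>z. eval_fps MF z = (1 - complex_of_real q * z) / D z) (nhds 0)"
  proof (rule eventually_mono)
    fix z :: complex assume "z \<in> ball 0 R0"
    hence z: "norm z < R0" by simp
    have "eval_fps MF z * eval_fps GF z = 1"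
      using eval_fps_mult[OF ereal_lt_rad[OF z rad_MF] ereal_lt_rad[OF z rad_GF]] MF_GF by simp
    moreover have "eval_fps GF z \<noteq> 0" using calculation by auto
    ultimately have "eval_fps MF z = 1 / eval_fps GF z" by (simp add: eq_divide_eq)
    also have "eval_fps GF z = Z z" using Zeq[OF z] by simp
    also have "1 / Z z = (1 - complex_of_real q * z) / D z"
    proof -
      have "z \<in> ball 0 R1" using z R0_R1 by simp
      moreover have "z \<noteq> complex_of_real (1/q)" using z q by auto
      ultimately have "D z = (1 - complex_of_real q * z) * Z z" by (rule D_Z)
      thus ?thesis using one_minus_qz[OF z] by simp
    qed
    finally show "eval_fps MF z = (1 - complex_of_real q * z) / D z" .
  qed
qed

lemma main_result:
  "\<exists>\<eta>::real. 0 \<le> \<eta> \<and> \<eta> < 1 \<and> (\<exists>C. \<forall>n. \<bar>real_of_int (Mu n)\<bar> \<le> C * q powr (\<eta> * real n))"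
proof -
  obtain \<rho> where rho: "R0 < \<rho>" "\<rho> \<le> 1" "\<rho> < R1" and Dnz: "\<And>z. norm z \<le> \<rho> \<Longrightarrow> D z \<noteq> 0"
    using exists_rho by blast
  have rho0: "\<rho> > 0" using rho(1) R0_pos by linarith
  define Fn where "Fn z = (1 - complex_of_real q * z) / D z" for z
  have cont: "continuous_on (cball 0 \<rho>) Fn"
    unfolding Fn_def
    by (intro continuous_intros holomorphic_on_imp_continuous_on[OF holomorphic_on_subset[OF D_hol]])
       (use rho Dnz in auto)
  have holF: "Fn holomorphic_on ball 0 \<rho>"
    unfolding Fn_def
    by (intro holomorphic_intros holomorphic_on_subset[OF D_hol]) (use rho Dnz in auto)
  obtain B where B: "\<forall>y\<in>Fn ` cball 0 \<rho>. norm y \<le> B"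
    using compact_imp_bounded[OF compact_continuous_image[OF cont compact_cball]]
    unfolding bounded_iff by blast
  have coef: "norm (fps_nth MF n) \<le> B / \<rho> ^ n" for n
  proof -
    have eq: "fps_nth MF n = (deriv ^^ n) Fn 0 / fact n"
      unfolding Fn_def by (rule fps_nth_fps_expansion[OF MF_expansion])
    have le:  "norm ((deriv ^^ n) Fn 0) \<le> fact n * B / \<rho> ^ n"
    proof (rule Cauchy_inequality[OF holF cont rho0])
      fix x :: complex assume "norm (0 - x) = \<rho>"
      thus "norm (Fn x) \<le> B" using B by auto
    qed
    have "norm (fps_nth MF n) = norm ((deriv ^^ n) Fn 0) / fact n"
      unfolding eq norm_divide by simp
    also have "\<dots> \<le> (fact n * B / \<rho> ^ n) / fact n"
      by (rule divide_right_mono[OF le]) simp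
    also have "\<dots> = B / \<rho> ^ n" by simp
    finally show ?thesis .
  qed
  define \<eta> where "\<eta> = - log q \<rho>"
  have "log q \<rho> \<le> log q 1" using rho rho0 q by (subst log_le_cancel_iff) auto
  hence e0': "0 \<le> \<eta>" unfolding \<eta>_def by simp
  have "log q R0 < log q \<rho>" using log_less_cancel_iff[of q R0 \<rho>] rho(1) rho0 R0_pos q by blast
  moreover have "log q R0 = -1" using q by (simp add: log_divide)
  ultimately have e1': "\<eta> < 1" unfolding \<eta>_def by simp
  have qp: "q powr (\<eta> * real n) = 1 / \<rho> ^ n" for n
  proof -
    have "q powr (\<eta> * real n) = (q powr (log q \<rho>)) powr (- real n)"
      unfolding \<eta>_def powr_powr by simp
    also have "\<dots> = \<rho> powr (- real n)" using q rho0 by simp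
    also have "\<dots> = 1 / \<rho> ^ n" using rho0 by (simp add: powr_minus_divide powr_realpow)
    finally show ?thesis .
  qed
  have "\<forall>n. \<bar>real_of_int (Mu n)\<bar> \<le> B * q powr (\<eta> * real n)"
  proof
    fix n
    have "\<bar>real_of_int (Mu n)\<bar> = norm (fps_nth MF n)" unfolding MF_def by simp
    also have "\<dots> \<le> B / \<rho> ^ n" by (rule coef)
    also have "\<dots> = B * q powr (\<eta> * real n)" unfolding qp by simp
    finally show "\<bar>real_of_int (Mu n)\<bar> \<le> B * q powr (\<eta> * real n)" .
  qed
  thus ?thesis using e0' e1' by blast
qed

end

context main
begin

lemma main_result':
  "\<exists>\<eta>::real. 0 \<le> \<eta> \<and> \<eta> < 1 \<and>
     (\<exists>C. \<forall>n. \<bar>real_of_int (\<Sum>g\<in>{g. deg g = n}. moebius P g)\<bar> \<le> C * q powr (\<eta> * real n))"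
  using main_result unfolding Mu_def .

end

theorem lemma2p4:
  fixes P :: "'a::comm_monoid_add set" and deg :: "'a \<Rightarrow> nat"
    and c q \<eta>0 :: real and Z :: "complex \<Rightarrow> complex"
  assumes "arith_semigroup P deg"
    and "c > 0" and "q > 1" and "0 \<le> \<eta>0" and "\<eta>0 < 1"
    and "axiom_A_sharp deg c q \<eta>0"
    and "Z holomorphic_on (ball 0 (q powr (-\<eta>0)) - {complex_of_real (1 / q)})"
    and "\<forall>z\<in>ball 0 (1 / q). Z z = (\<Sum>n. of_nat (Gcount deg n) * z ^ n)"
    and "Z (complex_of_real (- 1 / q)) \<noteq> 0"
  shows "\<exists>\<eta>::real. 0 \<le> \<eta> \<and> \<eta> < 1 \<and>
           (\<exists>C. \<forall>n. \<bar>real_of_int (\<Sum>g\<in>{g. deg g = n}. moebius P g)\<bar> \<le> C * q powr (\<eta> * real n))"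
proof -
  have m: "main P deg c q \<eta>0 Z"
    unfolding main_def main_axioms_def asg_def using assms by auto
  show ?thesis by (rule main.main_result'[OF m])
qed

end
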